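(* For any nonempty basic clopen sets $\mathcal U,\mathcal V\subseteq\mathcal G$ there is a permutation $\varphi$ of $\mathbb N$ with $\varphi(1)=1$ such that $h_\varphi(\mathcal U)\cap\mathcal V\neq\emptyset$.
   Context: Let $\mathbb N=\{1,2,3,\dots\}$. Equip $\mathbb N^{\mathbb N\times\mathbb N}$ with the product topology of the discrete topology on $\mathbb N$. Let $\mathcal G$ be the subspace consisting of those $A\in\mathbb N^{\mathbb N\times\mathbb N}$ that are the multiplication table of a group on the underlying set $\mathbb N$ whose identity element is $1$. Basic clopen sets are the sets of the form $\{G\in\mathcal G:\ G(n_i,m_i)=k_i\text{ for all }i\le l\}$ with $l,n_i,m_i,k_i\in\mathbb N$ (i.e. finitely many products $n_i\cdot m_i=k_i$ are prescribed). For a bijection $\varphi:\mathbb N\to\mathbb N$ fixing $1$, the induced homeomorphism $h_\varphi:\mathcal G\to\mathcal G$ is defined by $h_\varphi(G)(i,j)=\varphi(G(\varphi^{-1}(i),\varphi^{-1}(j)))$, so that $\varphi$ is an isomorphism from the group with table $G$ onto the group with table $h_\varphi(G)$. *)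

theory Defs
  imports Main
begin

text \<open>Elements of N^(N x N), with N = {1,2,...}, are represented as functions
  nat => nat => nat whose values at arguments involving 0 are normalised to 0.\<close>

definition is_table :: "(nat \<Rightarrow> nat \<Rightarrow> nat) \<Rightarrow> bool" where
  "is_table A \<longleftrightarrow> (\<forall>i j. (i = 0 \<or> j = 0) \<longrightarrow> A i j = 0) \<and>
                    (\<forall>i j. i \<ge> 1 \<and> j \<ge> 1 \<longrightarrow> A i j \<ge> 1)"

definition group_table :: "(nat \<Rightarrow> nat \<Rightarrow> nat) \<Rightarrow> bool" where
  "group_table A \<longleftrightarrow> is_table A \<and>
     (\<forall>i j k. i \<ge> 1 \<and> j \<ge> 1 \<and> k \<ge> 1 \<longrightarrow> A (A i j) k = A i (A j k)) \<and>
     (\<forall>i. i \<ge> 1 \<longrightarrow> A 1 i = i \<and> A i 1 = i) \<and>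
     (\<forall>i. i \<ge> 1 \<longrightarrow> (\<exists>j. j \<ge> 1 \<and> A i j = 1 \<and> A j i = 1))"

definition GG :: "(nat \<Rightarrow> nat \<Rightarrow> nat) set" where
  "GG = {A. group_table A}"

definition basic_clopen :: "(nat \<times> nat \<times> nat) list \<Rightarrow> (nat \<Rightarrow> nat \<Rightarrow> nat) set" where
  "basic_clopen L = {G \<in> GG. \<forall>(n, m, k) \<in> set L. G n m = k}"

definition pos_triples :: "(nat \<times> nat \<times> nat) list \<Rightarrow> bool" where
  "pos_triples L \<longleftrightarrow> (\<forall>(n, m, k) \<in> set L. n \<ge> 1 \<and> m \<ge> 1 \<and> k \<ge> 1)"

definition perm1 :: "(nat \<Rightarrow> nat) \<Rightarrow> bool" where
  "perm1 \<phi> \<longleftrightarrow> bij_betw \<phi> {1..} {1..} \<and> \<phi> 1 = 1"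

definition h_perm :: "(nat \<Rightarrow> nat) \<Rightarrow> (nat \<Rightarrow> nat \<Rightarrow> nat) \<Rightarrow> (nat \<Rightarrow> nat \<Rightarrow> nat)" where
  "h_perm \<phi> G = (\<lambda>i j. if i \<ge> 1 \<and> j \<ge> 1
      then \<phi> (G (inv_into {1..} \<phi> i) (inv_into {1..} \<phi> j)) else 0)"

end

theory Submission
  imports Defs "HOL-Library.Nat_Bijection" "HOL-Library.Countable_Set"
begin

definition ee :: "nat \<Rightarrow> nat \<Rightarrow> nat" where
  "ee a b = Suc (prod_encode (a - 1, b - 1))"
definition d1 :: "nat \<Rightarrow> nat" where
  "d1 x = Suc (fst (prod_decode (x - 1)))"
definition d2 :: "nat \<Rightarrow> nat" where
  "d2 x = Suc (snd (prod_decode (x - 1)))"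

lemma ee_ge[simp]: "Suc 0 \<le> ee a b" by (simp add: ee_def)
lemma d1_ee[simp]: "Suc 0 \<le> a \<Longrightarrow> Suc 0 \<le> b \<Longrightarrow> d1 (ee a b) = a"
  by (simp add: ee_def d1_def prod_encode_inverse)
lemma d2_ee[simp]: "Suc 0 \<le> a \<Longrightarrow> Suc 0 \<le> b \<Longrightarrow> d2 (ee a b) = b"
  by (simp add: ee_def d2_def prod_encode_inverse)
lemma ee_d[simp]: "Suc 0 \<le> x \<Longrightarrow> ee (d1 x) (d2 x) = x"
  by (simp add: ee_def d1_def d2_def prod_decode_inverse)
lemma d1_ge[simp]: "Suc 0 \<le> d1 x" by (simp add: d1_def)
lemma d2_ge[simp]: "Suc 0 \<le> d2 x" by (simp add: d2_def)
lemma ee11[simp]: "ee (Suc 0) (Suc 0) = Suc 0" by (simp add: ee_def prod_encode_def triangle_def)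
lemma d11[simp]: "d1 (Suc 0) = Suc 0" "d2 (Suc 0) = Suc 0"
  by (simp_all add: d1_def d2_def prod_decode_def prod_decode_aux.simps)

definition PP :: "(nat \<Rightarrow> nat \<Rightarrow> nat) \<Rightarrow> (nat \<Rightarrow> nat \<Rightarrow> nat) \<Rightarrow> nat \<Rightarrow> nat \<Rightarrow> nat" where
  "PP G1 G2 x y = (if x \<ge> 1 \<and> y \<ge> 1 then ee (G1 (d1 x) (d1 y)) (G2 (d2 x) (d2 y)) else 0)"

lemma gt_pos: "group_table G \<Longrightarrow> Suc 0 \<le> i \<Longrightarrow> Suc 0 \<le> j \<Longrightarrow> Suc 0 \<le> G i j"
  by (simp add: group_table_def is_table_def)

lemma PP_group:
  assumes g1: "group_table G1" and g2: "group_table G2"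
  shows "group_table (PP G1 G2)"
proof -
  note pos1 = gt_pos[OF g1] and pos2 = gt_pos[OF g2]
  note ge = d1_ge d2_ge ee_ge
  have ass1: "\<And>i j k. i \<ge> 1 \<Longrightarrow> j \<ge> 1 \<Longrightarrow> k \<ge> 1 \<Longrightarrow> G1 (G1 i j) k = G1 i (G1 j k)"
    using g1 by (simp add: group_table_def)
  have ass2: "\<And>i j k. i \<ge> 1 \<Longrightarrow> j \<ge> 1 \<Longrightarrow> k \<ge> 1 \<Longrightarrow> G2 (G2 i j) k = G2 i (G2 j k)"
    using g2 by (simp add: group_table_def)
  have id1: "\<And>i. i \<ge> 1 \<Longrightarrow> G1 (Suc 0) i = i \<and> G1 i (Suc 0) = i" using g1 by (simp add: group_table_def)
  have id2: "\<And>i. i \<ge> 1 \<Longrightarrow> G2 (Suc 0) i = i \<and> G2 i (Suc 0) = i" using g2 by (simp add: group_table_def)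
  have inv1: "\<And>i. i \<ge> 1 \<Longrightarrow> \<exists>j. j \<ge> 1 \<and> G1 i j = 1 \<and> G1 j i = 1" using g1 by (simp add: group_table_def)
  have inv2: "\<And>i. i \<ge> 1 \<Longrightarrow> \<exists>j. j \<ge> 1 \<and> G2 i j = 1 \<and> G2 j i = 1" using g2 by (simp add: group_table_def)
  have "is_table (PP G1 G2)" by (auto simp: is_table_def PP_def ee_ge)
  moreover have "\<forall>i j k. i \<ge> 1 \<and> j \<ge> 1 \<and> k \<ge> 1 \<longrightarrow> PP G1 G2 (PP G1 G2 i j) k = PP G1 G2 i (PP G1 G2 j k)"
  proof (intro allI impI)
    fix i j k :: nat assume h: "i \<ge> 1 \<and> j \<ge> 1 \<and> k \<ge> 1"
    have p: "PP G1 G2 i j = ee (G1 (d1 i) (d1 j)) (G2 (d2 i) (d2 j))"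
         "PP G1 G2 j k = ee (G1 (d1 j) (d1 k)) (G2 (d2 j) (d2 k))"
      using h by (simp_all add: PP_def)
    show "PP G1 G2 (PP G1 G2 i j) k = PP G1 G2 i (PP G1 G2 j k)"
      unfolding p using h
      by (simp add: PP_def pos1 pos2 d1_ge d2_ge ass1 ass2)
  qed
  moreover have "\<forall>i. i \<ge> 1 \<longrightarrow> PP G1 G2 1 i = i \<and> PP G1 G2 i 1 = i"
    by (auto simp: PP_def id1 id2 d1_ge d2_ge)
  moreover have "\<forall>i. i \<ge> 1 \<longrightarrow> (\<exists>j. j \<ge> 1 \<and> PP G1 G2 i j = 1 \<and> PP G1 G2 j i = 1)"
  proof (intro allI impI)
    fix i :: nat assume "i \<ge> 1"
    obtain a where a: "a \<ge> 1" "G1 (d1 i) a = 1" "G1 a (d1 i) = 1" using inv1[of "d1 i"] by auto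
    obtain b where b: "b \<ge> 1" "G2 (d2 i) b = 1" "G2 b (d2 i) = 1" using inv2[of "d2 i"] by auto
    show "\<exists>j. j \<ge> 1 \<and> PP G1 G2 i j = 1 \<and> PP G1 G2 j i = 1"
      by (rule exI[of _ "ee a b"]) (use a b \<open>i \<ge> 1\<close> in \<open>simp add: PP_def One_nat_def\<close>)
  qed
  ultimately show ?thesis by (simp add: group_table_def)
qed

lemma extend:
  fixes S :: "nat set"
  assumes "finite S" "S \<subseteq> {1..}" "inj_on f S" "f ` S \<subseteq> {1..}"
  shows "\<exists>\<alpha>. bij_betw \<alpha> {1..} {(1::nat)..} \<and> (\<forall>s\<in>S. \<alpha> s = f s)"
proof -
  let ?A = "{(1::nat)..} - S" and ?B = "{(1::nat)..} - f ` S"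
  have iA: "infinite ?A" by (rule Diff_infinite_finite[OF assms(1) infinite_Ici])
  have iB: "infinite ?B" by (rule Diff_infinite_finite[OF finite_imageI[OF assms(1)] infinite_Ici])
  obtain e1 :: "nat \<Rightarrow> nat" where e1: "bij_betw e1 ?A UNIV" using countableE_infinite[OF countableI_type iA] by metis
  obtain e2 :: "nat \<Rightarrow> nat" where e2: "bij_betw e2 ?B UNIV" using countableE_infinite[OF countableI_type iB] by metis
  define g where "g = inv_into ?B e2 \<circ> e1"
  have g: "bij_betw g ?A ?B"
    unfolding g_def by (rule bij_betw_trans[OF e1 bij_betw_inv_into[OF e2]])
  define \<alpha> where "\<alpha> x = (if x \<in> S then f x else g x)" for x
  have b0: "bij_betw f S (f ` S)" by (rule inj_on_imp_bij_betw[OF assms(3)])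
  have b1: "bij_betw \<alpha> S (f ` S)"
    using b0 by (rule bij_betw_cong[THEN iffD1, rotated]) (simp add: \<alpha>_def)
  have b2: "bij_betw \<alpha> ?A ?B"
    using g by (rule bij_betw_cong[THEN iffD1, rotated]) (simp add: \<alpha>_def)
  have disj: "f ` S \<inter> ?B = {}" by blast
  have b3: "bij_betw \<alpha> (S \<union> ?A) (f ` S \<union> ?B)"
    by (rule bij_betw_combine[OF b1 b2 disj])
  have e1': "S \<union> ?A = {1..}" using assms(2) by blast
  have e2': "f ` S \<union> ?B = {1..}" using assms(4) by blast
  have "bij_betw \<alpha> {1..} {(1::nat)..}" using b3 unfolding e1' e2' .
  moreover have "\<forall>s\<in>S. \<alpha> s = f s" by (simp add: \<alpha>_def)
  ultimately show ?thesis by blast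
qed

lemma bfacts:
  assumes "bij_betw \<alpha> {1..} {(1::nat)..}" "Suc 0 \<le> x"
  shows "Suc 0 \<le> \<alpha> x" "Suc 0 \<le> inv_into {1..} \<alpha> x"
    "\<alpha> (inv_into {1..} \<alpha> x) = x" "inv_into {1..} \<alpha> (\<alpha> x) = x"
proof -
  have x: "x \<in> {1..}" using assms(2) by simp
  show "Suc 0 \<le> \<alpha> x" using assms(1) x by (auto simp: bij_betw_def)
  show "Suc 0 \<le> inv_into {1..} \<alpha> x"
    using bij_betw_inv_into[OF assms(1)] x by (auto simp: bij_betw_def)
  show "\<alpha> (inv_into {1..} \<alpha> x) = x"
    using assms(1) x by (intro f_inv_into_f) (simp add: bij_betw_def)
  show "inv_into {1..} \<alpha> (\<alpha> x) = x"
    using assms(1) x by (intro inv_into_f_f) (simp_all add: bij_betw_def)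
qed

lemma hperm_alpha:
  assumes "bij_betw \<alpha> {1..} {(1::nat)..}" "Suc 0 \<le> i" "Suc 0 \<le> j"
  shows "h_perm (inv_into {1..} \<alpha>) G i j = inv_into {1..} \<alpha> (G (\<alpha> i) (\<alpha> j))"
proof -
  have "inv_into {1..} (inv_into {1..} \<alpha>) i = \<alpha> i" "inv_into {1..} (inv_into {1..} \<alpha>) j = \<alpha> j"
    using assms by (auto intro!: inv_into_inv_into_eq)
  moreover have "Suc 0 \<le> i \<and> Suc 0 \<le> j" using assms(2,3) by simp
  ultimately show ?thesis unfolding h_perm_def by simp
qed

lemma inv_into_eq:
  assumes "bij_betw \<phi> A A" "g x \<in> A" "\<phi> (g x) = x"
  shows "inv_into A \<phi> x = g x"
proof -
  have "inv_into A \<phi> (\<phi> (g x)) = g x"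
    using assms(1,2) by (intro inv_into_f_f) (auto simp: bij_betw_def)
  then show ?thesis using assms(3) by simp
qed

lemma transport:
  assumes b: "bij_betw \<alpha> {1..} {(1::nat)..}" and a1: "\<alpha> (Suc 0) = Suc 0" and g: "group_table G"
  shows "group_table (h_perm (inv_into {1..} \<alpha>) G)"
proof -
  define \<psi> where "\<psi> = inv_into {1..} \<alpha>"
  define H where "H = h_perm \<psi> G"
  note bf = bfacts[OF b, folded \<psi>_def]
  have Hi: "\<And>i j. Suc 0 \<le> i \<Longrightarrow> Suc 0 \<le> j \<Longrightarrow> H i j = \<psi> (G (\<alpha> i) (\<alpha> j))"
    unfolding H_def \<psi>_def using hperm_alpha[OF b] by simp
  note pos = gt_pos[OF g]
  have ass: "\<And>i j k. Suc 0 \<le> i \<Longrightarrow> Suc 0 \<le> j \<Longrightarrow> Suc 0 \<le> k \<Longrightarrow> G (G i j) k = G i (G j k)"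
    using g by (simp add: group_table_def)
  have idg: "\<And>i. Suc 0 \<le> i \<Longrightarrow> G (Suc 0) i = i \<and> G i (Suc 0) = i" using g by (simp add: group_table_def)
  have invg: "\<And>i. Suc 0 \<le> i \<Longrightarrow> \<exists>j. Suc 0 \<le> j \<and> G i j = Suc 0 \<and> G j i = Suc 0" using g by (simp add: group_table_def)
  have p1: "\<psi> (Suc 0) = Suc 0" using bf(4)[of "Suc 0"] a1 by simp
  have z: "\<forall>i j. (i = 0 \<or> j = 0) \<longrightarrow> H i j = 0" by (simp add: H_def h_perm_def)
  have "is_table H" unfolding is_table_def using z by (simp add: Hi bf pos)
  moreover have "\<forall>i j k. i \<ge> 1 \<and> j \<ge> 1 \<and> k \<ge> 1 \<longrightarrow> H (H i j) k = H i (H j k)"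
  proof (intro allI impI)
    fix i j k :: nat assume h: "i \<ge> 1 \<and> j \<ge> 1 \<and> k \<ge> 1"
    have q: "Suc 0 \<le> H i j" "Suc 0 \<le> H j k" using h by (simp_all add: Hi bf pos)
    show "H (H i j) k = H i (H j k)"
      using h q by (simp add: Hi bf pos ass)
  qed
  moreover have "\<forall>i. i \<ge> 1 \<longrightarrow> H 1 i = i \<and> H i 1 = i"
    by (auto simp: Hi bf idg a1 One_nat_def)
  moreover have "\<forall>i. i \<ge> 1 \<longrightarrow> (\<exists>j. j \<ge> 1 \<and> H i j = 1 \<and> H j i = 1)"
  proof (intro allI impI)
    fix i :: nat assume i: "i \<ge> 1"
    obtain j' where j': "Suc 0 \<le> j'" "G (\<alpha> i) j' = Suc 0" "G j' (\<alpha> i) = Suc 0"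
      using invg[of "\<alpha> i"] bf(1)[of i] i by auto
    show "\<exists>j. j \<ge> 1 \<and> H i j = 1 \<and> H j i = 1"
      by (rule exI[of _ "\<psi> j'"]) (use i j' in \<open>simp add: Hi bf p1 One_nat_def\<close>)
  qed
  ultimately have "group_table H" unfolding group_table_def by blast
  then show ?thesis by (simp add: H_def \<psi>_def)
qed


lemma setup_perm:
  fixes L :: "(nat \<times> nat \<times> nat) list" and f :: "nat \<Rightarrow> nat"
  assumes pos: "pos_triples L" and fi: "\<And>a b. Suc 0 \<le> a \<Longrightarrow> Suc 0 \<le> b \<Longrightarrow> f a = f b \<Longrightarrow> a = b"
    and fp: "\<And>a. Suc 0 \<le> f a" and f1: "f (Suc 0) = Suc 0"
  shows "\<exists>\<alpha>. bij_betw \<alpha> {1..} {(1::nat)..} \<and> \<alpha> (Suc 0) = Suc 0 \<and>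
     (\<forall>(n, m, k) \<in> set L. \<alpha> n = f n \<and> \<alpha> m = f m \<and> \<alpha> k = f k)"
proof -
  define S where "S = insert (Suc 0) (fst ` set L \<union> (fst \<circ> snd) ` set L \<union> (snd \<circ> snd) ` set L)"
  have fin: "finite S" by (simp add: S_def)
  have sub: "S \<subseteq> {1..}" using pos by (force simp: S_def pos_triples_def)
  have inj: "inj_on f S" using sub fi by (auto simp: inj_on_def)
  have im: "f ` S \<subseteq> {1..}" using fp by auto
  obtain \<alpha> where a: "bij_betw \<alpha> {1..} {(1::nat)..}" "\<forall>s\<in>S. \<alpha> s = f s"
    using extend[OF fin sub inj im] by blast
  have "\<alpha> (Suc 0) = Suc 0" using a(2) f1 by (simp add: S_def)
  moreover have "\<forall>(n, m, k) \<in> set L. \<alpha> n = f n \<and> \<alpha> m = f m \<and> \<alpha> k = f k"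
  proof (clarify)
    fix n m k assume "(n, m, k) \<in> set L"
    then have "n \<in> S" "m \<in> S" "k \<in> S" unfolding S_def by force+
    then show "\<alpha> n = f n \<and> \<alpha> m = f m \<and> \<alpha> k = f k" using a(2) by blast
  qed
  ultimately show ?thesis using a(1) by blast
qed

theorem lemma5p2:
  fixes L1 L2 :: "(nat \<times> nat \<times> nat) list"
  assumes "pos_triples L1" and "pos_triples L2"
    and "basic_clopen L1 \<noteq> {}" and "basic_clopen L2 \<noteq> {}"
  shows "\<exists>\<phi>. perm1 \<phi> \<and> h_perm \<phi> ` basic_clopen L1 \<inter> basic_clopen L2 \<noteq> {}"
proof -
  obtain G1 where G1: "G1 \<in> basic_clopen L1" using assms(3) by blast
  obtain G2 where G2: "G2 \<in> basic_clopen L2" using assms(4) by blast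
  have g1: "group_table G1" and g2: "group_table G2" using G1 G2 by (auto simp: basic_clopen_def GG_def)
  have L1: "\<forall>(n, m, k) \<in> set L1. G1 n m = k" using G1 by (simp add: basic_clopen_def)
  have L2: "\<forall>(n, m, k) \<in> set L2. G2 n m = k" using G2 by (simp add: basic_clopen_def)
  have id1: "\<And>i. Suc 0 \<le> i \<Longrightarrow> G1 (Suc 0) i = i \<and> G1 i (Suc 0) = i" using g1 by (simp add: group_table_def)
  have id2: "\<And>i. Suc 0 \<le> i \<Longrightarrow> G2 (Suc 0) i = i \<and> G2 i (Suc 0) = i" using g2 by (simp add: group_table_def)
  define P where "P = PP G1 G2"
  have gP: "group_table P" using PP_group[OF g1 g2] by (simp add: P_def)
  obtain \<alpha>1 where a1: "bij_betw \<alpha>1 {1..} {(1::nat)..}" "\<alpha>1 (Suc 0) = Suc 0"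
     "\<forall>(n, m, k) \<in> set L1. \<alpha>1 n = ee n (Suc 0) \<and> \<alpha>1 m = ee m (Suc 0) \<and> \<alpha>1 k = ee k (Suc 0)"
  proof -
    have inj: "\<And>a b. Suc 0 \<le> a \<Longrightarrow> Suc 0 \<le> b \<Longrightarrow> ee a (Suc 0) = ee b (Suc 0) \<Longrightarrow> a = b"
    proof -
      fix a b :: nat assume ab: "Suc 0 \<le> a" "Suc 0 \<le> b" and eq: "(\<lambda>s. ee s (Suc 0)) a = (\<lambda>s. ee s (Suc 0)) b"
      have "d1 ((\<lambda>s. ee s (Suc 0)) a) = d1 ((\<lambda>s. ee s (Suc 0)) b)" using eq by simp
      then show "a = b" using ab by simp
    qed
    have "\<exists>\<alpha>. bij_betw \<alpha> {1..} {(1::nat)..} \<and> \<alpha> (Suc 0) = Suc 0 \<and>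
     (\<forall>(n, m, k) \<in> set L1. \<alpha> n = (\<lambda>s. ee s (Suc 0)) n \<and> \<alpha> m = (\<lambda>s. ee s (Suc 0)) m \<and> \<alpha> k = (\<lambda>s. ee s (Suc 0)) k)"
      by (rule setup_perm[where f="\<lambda>s. ee s (Suc 0)", OF assms(1)]) (use inj in auto)
    then show ?thesis using that by auto

  qed
  obtain \<alpha>2 where a2: "bij_betw \<alpha>2 {1..} {(1::nat)..}" "\<alpha>2 (Suc 0) = Suc 0"
     "\<forall>(n, m, k) \<in> set L2. \<alpha>2 n = ee (Suc 0) n \<and> \<alpha>2 m = ee (Suc 0) m \<and> \<alpha>2 k = ee (Suc 0) k"
  proof -
    have inj: "\<And>a b. Suc 0 \<le> a \<Longrightarrow> Suc 0 \<le> b \<Longrightarrow> ee (Suc 0) a = ee (Suc 0) b \<Longrightarrow> a = b"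
    proof -
      fix a b :: nat assume ab: "Suc 0 \<le> a" "Suc 0 \<le> b" and eq: "(\<lambda>s. ee (Suc 0) s) a = (\<lambda>s. ee (Suc 0) s) b"
      have "d2 ((\<lambda>s. ee (Suc 0) s) a) = d2 ((\<lambda>s. ee (Suc 0) s) b)" using eq by simp
      then show "a = b" using ab by simp
    qed
    have "\<exists>\<alpha>. bij_betw \<alpha> {1..} {(1::nat)..} \<and> \<alpha> (Suc 0) = Suc 0 \<and>
     (\<forall>(n, m, k) \<in> set L2. \<alpha> n = (\<lambda>s. ee (Suc 0) s) n \<and> \<alpha> m = (\<lambda>s. ee (Suc 0) s) m \<and> \<alpha> k = (\<lambda>s. ee (Suc 0) s) k)"
      by (rule setup_perm[where f="\<lambda>s. ee (Suc 0) s", OF assms(2)]) (use inj in auto)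
    then show ?thesis using that by auto

  qed
  define \<psi>1 where "\<psi>1 = inv_into {1..} \<alpha>1"
  define \<psi>2 where "\<psi>2 = inv_into {1..} \<alpha>2"
  note bf1 = bfacts[OF a1(1), folded \<psi>1_def]
  note bf2 = bfacts[OF a2(1), folded \<psi>2_def]
  define K where "K = h_perm \<psi>1 P"
  define H where "H = h_perm \<psi>2 P"
  have Ki: "\<And>i j. Suc 0 \<le> i \<Longrightarrow> Suc 0 \<le> j \<Longrightarrow> K i j = \<psi>1 (P (\<alpha>1 i) (\<alpha>1 j))"
    unfolding K_def \<psi>1_def using hperm_alpha[OF a1(1)] by simp
  have Hi: "\<And>i j. Suc 0 \<le> i \<Longrightarrow> Suc 0 \<le> j \<Longrightarrow> H i j = \<psi>2 (P (\<alpha>2 i) (\<alpha>2 j))"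
    unfolding H_def \<psi>2_def using hperm_alpha[OF a2(1)] by simp
  have gK: "group_table K" unfolding K_def \<psi>1_def by (rule transport[OF a1(1,2) gP])
  have gH: "group_table H" unfolding H_def \<psi>2_def by (rule transport[OF a2(1,2) gP])
  have pos1: "\<forall>(n, m, k) \<in> set L1. Suc 0 \<le> n \<and> Suc 0 \<le> m \<and> Suc 0 \<le> k"
    using assms(1) by (simp add: pos_triples_def)
  have pos2: "\<forall>(n, m, k) \<in> set L2. Suc 0 \<le> n \<and> Suc 0 \<le> m \<and> Suc 0 \<le> k"
    using assms(2) by (simp add: pos_triples_def)
  have KL: "K \<in> basic_clopen L1"
    unfolding basic_clopen_def GG_def
  proof (intro CollectI conjI ballI gK, clarify)
    fix n m k assume t: "(n, m, k) \<in> set L1"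
    have p: "Suc 0 \<le> n" "Suc 0 \<le> m" "Suc 0 \<le> k" using pos1 t by auto
    have a: "\<alpha>1 n = ee n (Suc 0)" "\<alpha>1 m = ee m (Suc 0)" "\<alpha>1 k = ee k (Suc 0)" using a1(3) t by auto
    have gk: "G1 n m = k" using L1 t by auto
    have "K n m = \<psi>1 (P (ee n (Suc 0)) (ee m (Suc 0)))" using p a Ki by simp
    also have "P (ee n (Suc 0)) (ee m (Suc 0)) = ee k (Suc 0)"
      using p gk id2 by (simp add: P_def PP_def)
    also have "\<psi>1 (ee k (Suc 0)) = k" using bf1(4)[of k] p a by simp
    finally show "K n m = k" .
  qed
  have HL: "H \<in> basic_clopen L2"
    unfolding basic_clopen_def GG_def
  proof (intro CollectI conjI ballI gH, clarify)
    fix n m k assume t: "(n, m, k) \<in> set L2"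
    have p: "Suc 0 \<le> n" "Suc 0 \<le> m" "Suc 0 \<le> k" using pos2 t by auto
    have a: "\<alpha>2 n = ee (Suc 0) n" "\<alpha>2 m = ee (Suc 0) m" "\<alpha>2 k = ee (Suc 0) k" using a2(3) t by auto
    have gk: "G2 n m = k" using L2 t by auto
    have "H n m = \<psi>2 (P (ee (Suc 0) n) (ee (Suc 0) m))" using p a Hi by simp
    also have "P (ee (Suc 0) n) (ee (Suc 0) m) = ee (Suc 0) k"
      using p gk id1 by (simp add: P_def PP_def)
    also have "\<psi>2 (ee (Suc 0) k) = k" using bf2(4)[of k] p a by simp
    finally show "H n m = k" .
  qed
  define \<phi> where "\<phi> = \<psi>2 \<circ> \<alpha>1"
  have bphi: "bij_betw \<phi> {1..} {1..}"
    unfolding \<phi>_def \<psi>2_def using bij_betw_trans[OF a1(1) bij_betw_inv_into[OF a2(1)]] .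
  have phi1: "\<phi> (Suc 0) = Suc 0" using bf2(4)[of "Suc 0"] a1(2) a2(2) by (simp add: \<phi>_def)
  have pphi: "perm1 \<phi>" using bphi phi1 by (simp add: perm1_def)
  have iphi: "\<And>i. Suc 0 \<le> i \<Longrightarrow> inv_into {1..} \<phi> i = \<psi>1 (\<alpha>2 i)"
  proof -
    fix i :: nat assume i: "Suc 0 \<le> i"
    show "inv_into {1..} \<phi> i = \<psi>1 (\<alpha>2 i)"
    proof (rule inv_into_eq[OF bphi])
      show "\<psi>1 (\<alpha>2 i) \<in> {1..}" using bf1(2) bf2(1) i by simp
      show "\<phi> (\<psi>1 (\<alpha>2 i)) = i" using bf1(3)[OF bf2(1)[OF i]] bf2(4)[OF i] by (simp add: \<phi>_def)
    qed
  qed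
  have "h_perm \<phi> K = H"
  proof (intro ext)
    fix i j :: nat
    show "h_perm \<phi> K i j = H i j"
    proof (cases "Suc 0 \<le> i \<and> Suc 0 \<le> j")
      case True
      then have i: "Suc 0 \<le> i" and j: "Suc 0 \<le> j" by auto
      have ui: "Suc 0 \<le> \<psi>1 (\<alpha>2 i)" "Suc 0 \<le> \<psi>1 (\<alpha>2 j)"
        using bf1(2)[OF bf2(1)[OF i]] bf1(2)[OF bf2(1)[OF j]] by auto
      have "h_perm \<phi> K i j = \<phi> (K (\<psi>1 (\<alpha>2 i)) (\<psi>1 (\<alpha>2 j)))"
        using i j iphi by (simp add: h_perm_def)
      also have "\<dots> = \<phi> (\<psi>1 (P (\<alpha>2 i) (\<alpha>2 j)))"
        using Ki[OF ui] bf1(3)[OF bf2(1)[OF i]] bf1(3)[OF bf2(1)[OF j]] by simp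
      also have "\<dots> = \<psi>2 (P (\<alpha>2 i) (\<alpha>2 j))"
        using bf1(3)[OF gt_pos[OF gP bf2(1)[OF i] bf2(1)[OF j]]] by (simp add: \<phi>_def)
      also have "\<dots> = H i j" using Hi[OF i j] by simp
      finally show ?thesis .
    next
      case False
      then show ?thesis by (auto simp: h_perm_def H_def)
    qed
  qed
  then have "H \<in> h_perm \<phi> ` basic_clopen L1 \<inter> basic_clopen L2" using KL HL by blast
  then show ?thesis using pphi by blast
qed

end
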